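(* Let $(H,+,\circ)$ be a commutative multiplicative hyperring with identity, let $m\geq 1$, and let $P$ be a proper hyperideal of $H$. If $M_m(P)$ is an sdf-absorbing hyperideal of $M_m(H)$, then $P$ is an sdf-absorbing hyperideal of $H$.
   Context: A commutative multiplicative hyperring $(H,+,\circ)$ consists of an abelian group $(H,+)$ and an associative, commutative hyperoperation $\circ: H\times H\to P^*(H)$ with $x\circ(y+z)\subseteq x\circ y+x\circ z$ and $x\circ(-y)=-(x\circ y)=(-x)\circ y$. For subsets $A,B$, $A\circ B=\bigcup_{a\in A,b\in B}a\circ b$, $A\pm B=\{a\pm b\}$; $x^2=x\circ x$. Identity: $x\in x\circ 1$. A hyperideal is a nonempty $P$ with $x-y\in P$ and $r\circ x\subseteq P$ for $x,y\in P$, $r\in H$. $M_m(H)$ is the multiplicative hyperring of $m\times m$ matrices over $H$ with entrywise addition and hyperproduct $A\circ B=\{C: c_{ij}\in\sum_{k=1}^m a_{ik}\circ b_{kj}\}$; sets of matrices are compared entrywise. $M_m(P)$ is the set of matrices with all entries in $P$. A proper hyperideal $P$ (of $H$, or analogously of $M_m(H)$) is sdf-absorbing if whenever $x,y$ are nonzero elements and $x^2-y^2\subseteq P$, then $x-y\in P$ or $x+y\in P$. *)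

theory Defs
  imports Main "HOL-Library.Function_Algebras"
begin

text \<open>A hyperoperation on a type is a function into subsets; the additive
abelian group is the whole type with its ab_group_add structure.
Matrices of size m x m over H are represented as functions 'n => 'n => 'a
for a finite (nonempty) index type 'n with CARD('n) = m.\<close>

definition set_hmul :: "('a \<Rightarrow> 'a \<Rightarrow> 'a set) \<Rightarrow> 'a set \<Rightarrow> 'a set \<Rightarrow> 'a set" where
  "set_hmul mul A B = (\<Union>a\<in>A. \<Union>b\<in>B. mul a b)"

definition set_add :: "'a::ab_group_add set \<Rightarrow> 'a set \<Rightarrow> 'a set" where
  "set_add A B = {a + b | a b. a \<in> A \<and> b \<in> B}"

definition set_diff :: "'a::ab_group_add set \<Rightarrow> 'a set \<Rightarrow> 'a set" where
  "set_diff A B = {a - b | a b. a \<in> A \<and> b \<in> B}"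

definition set_neg :: "'a::ab_group_add set \<Rightarrow> 'a set" where
  "set_neg A = {- a | a. a \<in> A}"

definition comm_mult_hyperring :: "('a::ab_group_add \<Rightarrow> 'a \<Rightarrow> 'a set) \<Rightarrow> bool" where
  "comm_mult_hyperring mul \<longleftrightarrow>
     (\<forall>x y. mul x y \<noteq> {}) \<and>
     (\<forall>x y z. set_hmul mul (mul x y) {z} = set_hmul mul {x} (mul y z)) \<and>
     (\<forall>x y. mul x y = mul y x) \<and>
     (\<forall>x y z. mul x (y + z) \<subseteq> set_add (mul x y) (mul x z)) \<and>
     (\<forall>x y. mul x (- y) = set_neg (mul x y) \<and> mul (- x) y = set_neg (mul x y))"

definition hyperring_has_identity :: "('a \<Rightarrow> 'a \<Rightarrow> 'a set) \<Rightarrow> bool" where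
  "hyperring_has_identity mul \<longleftrightarrow> (\<exists>e. \<forall>x. x \<in> mul x e)"

definition hyperideal :: "('a::ab_group_add \<Rightarrow> 'a \<Rightarrow> 'a set) \<Rightarrow> 'a set \<Rightarrow> bool" where
  "hyperideal mul P \<longleftrightarrow> P \<noteq> {} \<and> (\<forall>x\<in>P. \<forall>y\<in>P. x - y \<in> P) \<and>
     (\<forall>r. \<forall>x\<in>P. mul r x \<subseteq> P)"

definition sdf_absorbing :: "('a::ab_group_add \<Rightarrow> 'a \<Rightarrow> 'a set) \<Rightarrow> 'a set \<Rightarrow> bool" where
  "sdf_absorbing mul P \<longleftrightarrow> hyperideal mul P \<and> P \<noteq> UNIV \<and>
     (\<forall>x y. x \<noteq> 0 \<longrightarrow> y \<noteq> 0 \<longrightarrow> set_diff (mul x x) (mul y y) \<subseteq> P \<longrightarrow>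
        x - y \<in> P \<or> x + y \<in> P)"

definition set_sum :: "('n::finite \<Rightarrow> 'a::ab_group_add set) \<Rightarrow> 'a set" where
  "set_sum S = {\<Sum>k\<in>UNIV. f k | f. \<forall>k. f k \<in> S k}"

definition mat_hmul :: "('a::ab_group_add \<Rightarrow> 'a \<Rightarrow> 'a set) \<Rightarrow>
    ('n::finite \<Rightarrow> 'n \<Rightarrow> 'a) \<Rightarrow> ('n \<Rightarrow> 'n \<Rightarrow> 'a) \<Rightarrow> ('n \<Rightarrow> 'n \<Rightarrow> 'a) set" where
  "mat_hmul mul A B = {C. \<forall>i j. C i j \<in> set_sum (\<lambda>k. mul (A i k) (B k j))}"

definition mat_set :: "'a set \<Rightarrow> ('n::finite \<Rightarrow> 'n \<Rightarrow> 'a) set" where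
  "mat_set P = {A. \<forall>i j. A i j \<in> P}"

end

theory Submission
  imports Defs
begin

lemma hi_zero: "hyperideal mul P \<Longrightarrow> 0 \<in> P"
  unfolding hyperideal_def by (metis all_not_in_conv diff_self)

lemma hi_add: "hyperideal mul P \<Longrightarrow> a \<in> P \<Longrightarrow> b \<in> P \<Longrightarrow> a + b \<in> P"
proof -
  assume h: "hyperideal mul P" "a \<in> P" "b \<in> P"
  have "0 - b \<in> P" using h hi_zero[OF h(1)] unfolding hyperideal_def by blast
  hence "a - (0 - b) \<in> P" using h unfolding hyperideal_def by blast
  thus ?thesis by simp
qed

lemma hi_sum: assumes "hyperideal mul P" "finite A" "\<forall>k\<in>A. f k \<in> P" shows "sum f A \<in> P"
  using assms(2,3) by (induction A rule: finite_induct) (auto intro: hi_add[OF assms(1)] hi_zero[OF assms(1)])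

lemma hi_mul0: "comm_mult_hyperring mul \<Longrightarrow> hyperideal mul P \<Longrightarrow> mul r 0 \<subseteq> P \<and> mul 0 r \<subseteq> P"
  using hi_zero[of mul P] unfolding hyperideal_def comm_mult_hyperring_def by metis

theorem mainTheorem12:
  fixes mul :: "'a::ab_group_add \<Rightarrow> 'a \<Rightarrow> 'a set"
    and P :: "'a set"
  assumes "comm_mult_hyperring mul"
    and "hyperring_has_identity mul"
    and "hyperideal mul P" and "P \<noteq> UNIV"
    and "sdf_absorbing (mat_hmul mul) (mat_set P :: ('n::finite \<Rightarrow> 'n \<Rightarrow> 'a) set)"
  shows "sdf_absorbing mul P"
proof -
  note cm = assms(1) and hi = assms(3)
  have main: "x - y \<in> P \<or> x + y \<in> P"
    if xy: "x \<noteq> 0" "y \<noteq> 0" "set_diff (mul x x) (mul y y) \<subseteq> P" for x y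
  proof -
    define i0 :: 'n where "i0 = undefined"
    define X :: "'n \<Rightarrow> 'n \<Rightarrow> 'a" where "X = (\<lambda>i j. if i = i0 \<and> j = i0 then x else 0)"
    define Y :: "'n \<Rightarrow> 'n \<Rightarrow> 'a" where "Y = (\<lambda>i j. if i = i0 \<and> j = i0 then y else 0)"
    have X0: "X \<noteq> 0"
    proof
      assume "X = 0" hence "X i0 i0 = 0" by simp
      thus False using xy(1) unfolding X_def by simp
    qed
    have Y0: "Y \<noteq> 0"
    proof
      assume "Y = 0" hence "Y i0 i0 = 0" by simp
      thus False using xy(2) unfolding Y_def by simp
    qed
    have entry: "\<exists>a p. a \<in> mul z z \<and> p \<in> P \<and> C i0 i0 = a + p"
      "\<forall>i j. (i, j) \<noteq> (i0, i0) \<longrightarrow> C i j \<in> P"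
      if C: "C \<in> mat_hmul mul Z Z" and Z: "Z = (\<lambda>i j. if i = i0 \<and> j = i0 then z else 0)" for C Z z
    proof -
      have Ce: "\<And>i j. C i j \<in> set_sum (\<lambda>k. mul (Z i k) (Z k j))" using C unfolding mat_hmul_def by blast
      obtain f where f: "\<forall>k. f k \<in> mul (Z i0 k) (Z k i0)" and Cf: "C i0 i0 = sum f UNIV"
        using Ce[of i0 i0] unfolding set_sum_def by blast
      have fi0: "f i0 \<in> mul z z" using f[rule_format, of i0] Z by simp
      have rest: "sum f (UNIV - {i0}) \<in> P"
      proof (rule hi_sum[OF hi])
        show "\<forall>k\<in>UNIV - {i0}. f k \<in> P"
        proof
          fix k assume "k \<in> UNIV - {i0}"
          hence "f k \<in> mul 0 0" using f[rule_format, of k] Z by auto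
          thus "f k \<in> P" using hi_mul0[OF cm hi] by blast
        qed
      qed simp
      have "sum f UNIV = f i0 + sum f (UNIV - {i0})"
        by (simp add: sum.remove)
      hence "C i0 i0 = f i0 + sum f (UNIV - {i0})" using Cf by simp
      thus "\<exists>a p. a \<in> mul z z \<and> p \<in> P \<and> C i0 i0 = a + p" using fi0 rest by blast
      show "\<forall>i j. (i, j) \<noteq> (i0, i0) \<longrightarrow> C i j \<in> P"
      proof (intro allI impI)
        fix i j assume ij: "(i, j) \<noteq> (i0, i0)"
        obtain g where g: "\<forall>k. g k \<in> mul (Z i k) (Z k j)" and Cg: "C i j = sum g UNIV"
          using Ce[of i j] unfolding set_sum_def by blast
        have "\<forall>k\<in>UNIV. g k \<in> P"
        proof
          fix k
          have "Z i k = 0 \<or> Z k j = 0" using ij Z by auto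
          thus "g k \<in> P" using g[rule_format, of k] hi_mul0[OF cm hi] by (metis subsetD)
        qed
        thus "C i j \<in> P" using Cg hi_sum[OF hi, of UNIV g] by simp
      qed
    qed
    have "set_diff (mat_hmul mul X X) (mat_hmul mul Y Y) \<subseteq> mat_set P"
    proof
      fix M assume "M \<in> set_diff (mat_hmul mul X X) (mat_hmul mul Y Y)"
      then obtain C D where C: "C \<in> mat_hmul mul X X" and D: "D \<in> mat_hmul mul Y Y" and M: "M = C - D"
        unfolding set_diff_def by blast
      show "M \<in> mat_set P" unfolding mat_set_def
      proof (intro CollectI allI)
        fix i j
        show "M i j \<in> P"
        proof (cases "(i, j) = (i0, i0)")
          case True
          obtain a p where a: "a \<in> mul x x" "p \<in> P" "C i0 i0 = a + p" using entry(1)[OF C X_def] by blast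
          obtain b q where b: "b \<in> mul y y" "q \<in> P" "D i0 i0 = b + q" using entry(1)[OF D Y_def] by blast
          have ab: "a - b \<in> P" using xy(3) a b unfolding set_diff_def by blast
          have pq: "p - q \<in> P" using a b hi unfolding hyperideal_def by blast
          have "M i j = C i0 i0 - D i0 i0" using True M by simp
          also have "\<dots> = (a - b) + (p - q)" using a b by (simp add: algebra_simps)
          finally have "M i j = (a - b) + (p - q)" .
          thus ?thesis using hi_add[OF hi ab pq] by simp
        next
          case False
          have "C i j \<in> P" "D i j \<in> P" using entry(2)[OF C X_def] entry(2)[OF D Y_def] False by auto
          thus ?thesis using M hi unfolding hyperideal_def by simp
        qed
      qed
    qed
    moreover have "\<forall>A B. A \<noteq> 0 \<longrightarrow> B \<noteq> 0 \<longrightarrow> set_diff (mat_hmul mul A A) (mat_hmul mul B B) \<subseteq> (mat_set P :: ('n \<Rightarrow> 'n \<Rightarrow> 'a) set) \<longrightarrow>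
        A - B \<in> mat_set P \<or> A + B \<in> mat_set P"
      using assms(5) unfolding sdf_absorbing_def by (rule conjunct2[OF conjunct2])
    ultimately have "X - Y \<in> mat_set P \<or> X + Y \<in> mat_set P"
      using X0 Y0 by blast
    hence "(X - Y) i0 i0 \<in> P \<or> (X + Y) i0 i0 \<in> P" unfolding mat_set_def by blast
    thus ?thesis unfolding X_def Y_def by simp
  qed
  show ?thesis unfolding sdf_absorbing_def using hi assms(4) main by blast
qed

end
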